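(* Let $G$ be a weighted undirected graph on $n$ vertices with graph Laplacian $L$, let $\pi$ be a partition of its vertex set with indicator matrix $P$ and quotient Laplacian $L^\pi$, and let $E=LP-PL^\pi$. Let $(\lambda,v)$ be an eigenvalue–eigenvector pair of $L^\pi$ and suppose the equitable error satisfies $\|Ev\|\le\delta$. Let $x_1,\dots,x_n$ be an orthonormal eigenbasis of $L$ with $Lx_i=\lambda_ix_i$, let $\gamma>0$, let $\mathcal{A}=\{i:|\lambda_i-\lambda|<\gamma\}$, $m=|\mathcal{A}|$, and $u=\sum_{i\in\mathcal{A}}\langle Pv,x_i\rangle x_i$. Then $$\|Pv-u\|\le\frac{\delta}{\gamma}\sqrt{n-m}.$$
   Context: The graph Laplacian is $L=D-A$, with $A$ the weighted adjacency matrix and $D$ the diagonal matrix of its row sums. For a partition $\pi=\{V_1,\dots,V_k\}$ of the vertices, the indicator matrix $P\in\mathbb{R}^{n\times k}$ has $P_{il}=1$ if $v_i\in V_l$ and $0$ otherwise, and the quotient Laplacian is $L^\pi=(P^TP)^{-1}P^TLP$. The vector $Ev$ is called the equitable error of $v$. $\|\cdot\|$ denotes the Euclidean norm. *)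

theory Defs
  imports "HOL-Analysis.Analysis"
begin

definition weighted_adjacency :: "real^'n^'n \<Rightarrow> bool" where
  "weighted_adjacency A \<longleftrightarrow> transpose A = A \<and> (\<forall>i j. A $ i $ j \<ge> 0)"

definition degree_matrix :: "real^'n^'n \<Rightarrow> real^'n^'n" where
  "degree_matrix A = (\<chi> i j. if i = j then (\<Sum>k\<in>UNIV. A $ i $ k) else 0)"

definition laplacian :: "real^'n^'n \<Rightarrow> real^'n^'n" where
  "laplacian A = degree_matrix A - A"

text \<open>A partition of the vertex set into blocks indexed by 'k is given by a surjective
  block-assignment map f (surjectivity = every block nonempty).  Indicator matrix P.\<close>
definition indicator_matrix :: "('n \<Rightarrow> 'k) \<Rightarrow> real^'k^'n" where
  "indicator_matrix f = (\<chi> i l. if f i = l then 1 else 0)"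

definition quotient_laplacian :: "real^'n^'n \<Rightarrow> ('n \<Rightarrow> 'k) \<Rightarrow> real^'k^'k" where
  "quotient_laplacian L f =
     matrix_inv (transpose (indicator_matrix f) ** indicator_matrix f)
       ** transpose (indicator_matrix f) ** L ** indicator_matrix f"

definition equitable_error_matrix :: "real^'n^'n \<Rightarrow> ('n \<Rightarrow> 'k) \<Rightarrow> real^'k^'n" where
  "equitable_error_matrix L f =
     L ** indicator_matrix f - indicator_matrix f ** quotient_laplacian L f"

end

theory Submission
  imports Defs
begin

lemma parseval:
  fixes x :: "'n::finite \<Rightarrow> real^'n"
  assumes orth: "\<And>i j. x i \<bullet> x j = (if i = j then 1 else 0)"
  shows "norm z ^ 2 = (\<Sum>i\<in>UNIV. (z \<bullet> x i)^2)"
proof -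
  have inj: "inj x"
  proof (rule injI)
    fix i j assume "x i = x j"
    then have "x i \<bullet> x j = 1" using orth[of j j] by simp
    then show "i = j" using orth[of i j] by (auto split: if_splits)
  qed
  have ind: "independent (range x)"
  proof (rule pairwise_orthogonal_independent)
    show "pairwise orthogonal (range x)"
      unfolding pairwise_def orthogonal_def using orth by auto
    show "0 \<notin> range x" using orth by (metis (no_types, lifting) imageE inner_zero_left zero_neq_one)
  qed
  have card: "card (range x) = CARD('n)" using inj by (simp add: card_image)
  have "UNIV \<subseteq> span (range x)"
    by (rule card_ge_dim_independent[OF _ ind]) (auto simp: card)
  then have "z \<in> span (range x)" by auto
  then obtain a where a: "z = (\<Sum>v\<in>range x. a v *\<^sub>R v)"
    using span_finite[of "range x"] by auto
  then have z: "z = (\<Sum>i\<in>UNIV. a (x i) *\<^sub>R x i)"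
    using sum.reindex[OF inj, of "\<lambda>v. a v *\<^sub>R v"] by simp
  have c: "z \<bullet> x j = a (x j)" for j
    unfolding z by (simp add: inner_sum_left orth if_distrib cong: if_cong)
  have "norm z ^ 2 = z \<bullet> z" by (simp add: power2_norm_eq_inner)
  also have "\<dots> = (\<Sum>i\<in>UNIV. a (x i) * (x i \<bullet> z))"
    by (subst (1) z) (simp add: inner_sum_left)
  also have "\<dots> = (\<Sum>i\<in>UNIV. (z \<bullet> x i)^2)"
    by (simp add: c inner_commute power2_eq_square)
  finally show ?thesis .
qed
theorem mainTheorem8:
  fixes A :: "real^'n::finite^'n"
    and f :: "'n \<Rightarrow> 'k::finite"
    and lambda delta gamma :: real
    and v :: "real^'k"
    and x :: "'n \<Rightarrow> real^'n"
    and lam :: "'n \<Rightarrow> real"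
  assumes adj: "weighted_adjacency A"
    and part: "surj f"
    and v_nz: "v \<noteq> 0"
    and eig: "quotient_laplacian (laplacian A) f *v v = lambda *\<^sub>R v"
    and err: "norm (equitable_error_matrix (laplacian A) f *v v) \<le> delta"
    and orth: "\<And>i j. x i \<bullet> x j = (if i = j then 1 else 0)"
    and eigL: "\<And>i. laplacian A *v x i = lam i *\<^sub>R x i"
    and gpos: "gamma > 0"
  shows "norm (indicator_matrix f *v v
           - (\<Sum>i\<in>{i. \<bar>lam i - lambda\<bar> < gamma}. ((indicator_matrix f *v v) \<bullet> x i) *\<^sub>R x i))
         \<le> delta / gamma * sqrt (real (CARD('n) - card {i. \<bar>lam i - lambda\<bar> < gamma}))"
proof -
  let ?L = "laplacian A"
  let ?P = "indicator_matrix f"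
  define w where "w = ?P *v v"
  define B where "B = {i. \<bar>lam i - lambda\<bar> < gamma}"
  define u where "u = (\<Sum>i\<in>B. (w \<bullet> x i) *\<^sub>R x i)"
  have symL: "transpose ?L = ?L"
  proof -
    have "A $ i $ j = A $ j $ i" for i j
      using adj unfolding weighted_adjacency_def transpose_def
      by (metis vec_lambda_beta)
    then show ?thesis
      unfolding laplacian_def degree_matrix_def transpose_def
      by (simp add: vec_eq_iff)
  qed
  have z: "equitable_error_matrix ?L f *v v = ?L *v w - lambda *\<^sub>R w"
    unfolding equitable_error_matrix_def w_def
    by (simp add: matrix_vector_mult_diff_rdistrib matrix_vector_mul_assoc[symmetric] eig
        matrix_vector_mult_scaleR)
  have zx: "(?L *v w - lambda *\<^sub>R w) \<bullet> x i = (lam i - lambda) * (w \<bullet> x i)" for i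
  proof -
    have "(?L *v w) \<bullet> x i = w \<bullet> (?L *v x i)"
      by (metis dot_lmul_matrix inner_commute symL transpose_matrix_vector)
    then show ?thesis by (simp add: inner_diff_left eigL algebra_simps)
  qed
  have ux: "(w - u) \<bullet> x i = (if i \<in> B then 0 else w \<bullet> x i)" for i
    unfolding u_def by (simp add: inner_diff_left inner_sum_left orth if_distrib cong: if_cong)
  have d0: "delta \<ge> 0" using err norm_ge_zero order_trans by blast
  have n1: "norm (w - u) ^ 2 = (\<Sum>i\<in>-B. (w \<bullet> x i)^2)"
  proof -
    have "norm (w - u) ^ 2 = (\<Sum>i\<in>UNIV. (if i \<in> B then 0 else (w \<bullet> x i)^2))"
      by (simp add: parseval[OF orth] ux)
      (rule sum.cong; simp)
    also have "\<dots> = (\<Sum>i\<in>-B. (w \<bullet> x i)^2)"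
      by (simp add: sum.If_cases Compl_eq_Diff_UNIV)
    finally show ?thesis .
  qed
  have "gamma^2 * norm (w - u) ^ 2 = (\<Sum>i\<in>-B. gamma^2 * (w \<bullet> x i)^2)"
    by (simp add: n1 sum_distrib_left)
  also have "\<dots> \<le> (\<Sum>i\<in>-B. ((lam i - lambda) * (w \<bullet> x i))^2)"
  proof (rule sum_mono)
    fix i assume "i \<in> -B"
    then have "gamma \<le> \<bar>lam i - lambda\<bar>" by (auto simp: B_def)
    then have "gamma^2 \<le> (lam i - lambda)^2"
      using gpos by (metis abs_le_square_iff abs_of_pos)
    then show "gamma^2 * (w \<bullet> x i)^2 \<le> ((lam i - lambda) * (w \<bullet> x i))^2"
      by (simp add: power_mult_distrib mult_right_mono)
  qed
  also have "\<dots> \<le> (\<Sum>i\<in>UNIV. ((lam i - lambda) * (w \<bullet> x i))^2)"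
    by (rule sum_mono2) auto
  also have "\<dots> = norm (?L *v w - lambda *\<^sub>R w) ^ 2"
    by (simp add: parseval[OF orth] zx)
  also have "\<dots> \<le> delta ^ 2"
    using err z by (simp add: power_mono)
  finally have key: "gamma^2 * norm (w - u) ^ 2 \<le> delta^2" .
  have nb: "norm (w - u) \<le> delta / gamma"
  proof -
    have "(gamma * norm (w - u))^2 \<le> delta^2" using key by (simp add: power_mult_distrib)
    then have "gamma * norm (w - u) \<le> delta" using d0 by (rule power2_le_imp_le)
    then show ?thesis using gpos by (simp add: field_simps)
  qed
  have cardB: "CARD('n) - card B = card (-B)"
    by (simp add: Compl_eq_Diff_UNIV card_Diff_subset)
  show ?thesis
  proof (cases "-B = {}")
    case True
    then have "norm (w - u) ^ 2 = 0" using n1 by simp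
    then show ?thesis using d0 gpos
      by (simp add: w_def u_def B_def)
  next
    case False
    then have "card (-B) \<ge> 1" by (simp add: Suc_le_eq card_gt_0_iff)
    then have "sqrt (real (card (-B))) \<ge> 1" by simp
    then have "delta / gamma \<le> delta / gamma * sqrt (real (card (-B)))"
      using d0 gpos mult_left_mono[of 1 "sqrt (real (card (-B)))" "delta / gamma"] by simp
    with nb cardB show ?thesis by (simp add: w_def u_def B_def)
  qed
qed

end
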